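(* Let $A$ be a unital involutive $k$-algebra and let $d:A^{\otimes3}\to A$ be the $k$-linear map with $d(a_0\otimes a_1\otimes a_2)=a_0a_1a_2-a_2\overline{a_1}a_0$. The homology of the partial chain complex $0\leftarrow A\xleftarrow{d}A^{\otimes3}$ at $A$, namely $A/\mathrm{Im}(d)$, is isomorphic to $HO_0(A)$.
   Context: An involutive $k$-algebra is a unital associative $k$-algebra with $k$-linear $a\mapsto\overline a$, $\overline{\overline a}=a$, $\overline{ab}=\overline b\,\overline a$, $\overline1=1$. Let $C_2=\{1,t\}$. The hyperoctahedral category $\Delta H$: objects $[n]=\{0,\dots,n\}$, $n\ge0$; a morphism $f:[n]\to[m]$ is a map of sets with a total order on each fibre and a $C_2$-label on each element of $[n]$; composition $g\circ f$ has fibre over $i$ equal to the concatenation, in the order of $g^{-1}(i)$, of the fibres $f^{-1}(j)$, each replaced by $f^{-1}(j)^t$ (order reversed, labels multiplied by $t$) when $j$ has label $t$ in $g$. The hyperoctahedral bar construction $\mathsf{H}_A:\Delta H\to\mathbf{Mod}_k$ sends $[n]\mapsto A^{\otimes(n+1)}$ and $f$ to $a_0\otimes\cdots\otimes a_n\mapsto b_0\otimes\cdots\otimes b_m$, $b_i$ being the ordered product over $x\in f^{-1}(i)$ of $a_x$ (label $1$) or $\overline{a_x}$ (label $t$), empty product $1_A$. Hyperoctahedral homology is $HO_n(A)=\mathrm{Tor}_n^{\Delta H}(k^{\star},\mathsf{H}_A)$ with $k^{\star}$ the constant right $\Delta H$-module at $k$. *)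

theory Defs
  imports Main "HOL-Library.Function_Algebras"
begin

text \<open>The unital associative ring structure of A is the type class ring_1 of 'a;
  the k-module structure is the scalar action sc; k is a commutative ring.\<close>
definition inv_algebra :: "('k::comm_ring_1 \<Rightarrow> 'a::ring_1 \<Rightarrow> 'a) \<Rightarrow> ('a \<Rightarrow> 'a) \<Rightarrow> bool" where
  "inv_algebra sc bar \<longleftrightarrow>
     (\<forall>r x y. sc r (x + y) = sc r x + sc r y) \<and>
     (\<forall>r q x. sc (r + q) x = sc r x + sc q x) \<and>
     (\<forall>r q x. sc (r * q) x = sc r (sc q x)) \<and>
     (\<forall>x. sc 1 x = x) \<and>
     (\<forall>r x y. sc r (x * y) = sc r x * y \<and> sc r (x * y) = x * sc r y) \<and>
     (\<forall>x y. bar (x + y) = bar x + bar y) \<and>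
     (\<forall>r x. bar (sc r x) = sc r (bar x)) \<and>
     (\<forall>x. bar (bar x) = x) \<and>
     (\<forall>x y. bar (x * y) = bar y * bar x) \<and>
     bar 1 = 1"

inductive_set kspan :: "('k \<Rightarrow> 'v::ab_group_add \<Rightarrow> 'v) \<Rightarrow> 'v set \<Rightarrow> 'v set"
  for sc :: "'k \<Rightarrow> 'v \<Rightarrow> 'v" and S :: "'v set" where
  kspan_zero: "0 \<in> kspan sc S"
| kspan_base: "x \<in> S \<Longrightarrow> x \<in> kspan sc S"
| kspan_add: "x \<in> kspan sc S \<Longrightarrow> y \<in> kspan sc S \<Longrightarrow> x + y \<in> kspan sc S"
| kspan_scale: "x \<in> kspan sc S \<Longrightarrow> sc r x \<in> kspan sc S"

text \<open>The quotient modules V/W and V'/W' are isomorphic as k-modules, expressed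
  on representatives: phi induces a well-defined, injective, surjective,
  k-linear map V/W \<rightarrow> V'/W'.\<close>
definition quot_iso ::
  "('k \<Rightarrow> 'v::ab_group_add \<Rightarrow> 'v) \<Rightarrow> 'v set \<Rightarrow> 'v set \<Rightarrow>
   ('k \<Rightarrow> 'w::ab_group_add \<Rightarrow> 'w) \<Rightarrow> 'w set \<Rightarrow> 'w set \<Rightarrow> bool" where
  "quot_iso sc V W sc' V' W' \<longleftrightarrow>
     (\<exists>\<phi>. (\<forall>x\<in>V. \<phi> x \<in> V') \<and>
          (\<forall>x\<in>V. \<forall>y\<in>V. (\<phi> x - \<phi> y \<in> W') \<longleftrightarrow> (x - y \<in> W)) \<and>
          (\<forall>z\<in>V'. \<exists>x\<in>V. \<phi> x - z \<in> W') \<and>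
          (\<forall>x\<in>V. \<forall>y\<in>V. \<phi> (x + y) - (\<phi> x + \<phi> y) \<in> W') \<and>
          (\<forall>r. \<forall>x\<in>V. \<phi> (sc r x) - sc' r (\<phi> x) \<in> W'))"

text \<open>Free k-module on nonempty words over A: finitely supported functions.
  The word [a_0,...,a_n] stands for the pure tensor a_0 \<otimes> ... \<otimes> a_n in A^{\<otimes>(n+1)}.\<close>
definition free_words :: "('a list \<Rightarrow> 'k::comm_ring_1) set" where
  "free_words = {c. finite {l. c l \<noteq> 0} \<and> (\<forall>l. c l \<noteq> 0 \<longrightarrow> l \<noteq> [])}"

definition fscale :: "'k::comm_ring_1 \<Rightarrow> ('a list \<Rightarrow> 'k) \<Rightarrow> ('a list \<Rightarrow> 'k)" where
  "fscale r c = (\<lambda>l. r * c l)"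

definition delta :: "'a list \<Rightarrow> ('a list \<Rightarrow> 'k::comm_ring_1)" where
  "delta w = (\<lambda>l. if l = w then 1 else 0)"

text \<open>A morphism [n] \<rightarrow> [m] of the hyperoctahedral category: the fibre over i is the
  list L!i (listed in its total order); the fibres partition {0..n}; lab x = True
  means x carries the label t.\<close>
definition dh_mor :: "nat \<Rightarrow> nat \<Rightarrow> nat list list \<Rightarrow> bool" where
  "dh_mor n m L \<longleftrightarrow> length L = Suc m \<and> distinct (concat L) \<and> set (concat L) = {0..n}"

definition dh_act :: "('a::ring_1 \<Rightarrow> 'a) \<Rightarrow> nat list list \<Rightarrow> (nat \<Rightarrow> bool) \<Rightarrow> 'a list \<Rightarrow> 'a list" where
  "dh_act bar L lab as =
     map (\<lambda>fib. prod_list (map (\<lambda>x. if lab x then bar (as ! x) else as ! x) fib)) L"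

text \<open>Relations: multilinearity (presenting each A^{\<otimes>(n+1)} as a quotient of the
  free module on words) and x ~ H_A(f)(x) for all morphisms f (giving
  k^* \<otimes>_{\<Delta>H} H_A = Tor_0).\<close>
definition HO0_gens :: "('k::comm_ring_1 \<Rightarrow> 'a::ring_1 \<Rightarrow> 'a) \<Rightarrow> ('a \<Rightarrow> 'a) \<Rightarrow> ('a list \<Rightarrow> 'k) set" where
  "HO0_gens sc bar =
     {delta (xs @ [a + b] @ ys) - delta (xs @ [a] @ ys) - delta (xs @ [b] @ ys) | xs a b ys. True}
   \<union> {delta (xs @ [sc r a] @ ys) - fscale r (delta (xs @ [a] @ ys)) | xs r a ys. True}
   \<union> {delta (dh_act bar L lab as) - delta as | n m L lab as. dh_mor n m L \<and> length as = Suc n}"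

definition HO0_rel :: "('k::comm_ring_1 \<Rightarrow> 'a::ring_1 \<Rightarrow> 'a) \<Rightarrow> ('a \<Rightarrow> 'a) \<Rightarrow> ('a list \<Rightarrow> 'k) set" where
  "HO0_rel sc bar = kspan fscale (HO0_gens sc bar)"

definition im_d :: "('k::comm_ring_1 \<Rightarrow> 'a::ring_1 \<Rightarrow> 'a) \<Rightarrow> ('a \<Rightarrow> 'a) \<Rightarrow> 'a set" where
  "im_d sc bar = kspan sc {a0 * a1 * a2 - a2 * bar a1 * a0 | a0 a1 a2. True}"

end

theory Submission
  imports Defs "HOL-Library.Multiset"
begin

lemma sum_fun_app: "finite S \<Longrightarrow> (sum f S) x = (\<Sum>i\<in>S. f i x)"
  by (induction S rule: finite_induct) auto

lemma kspan_neg: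
  assumes "\<And>x. sc (-1) x = - x" and "x \<in> kspan sc S"
  shows "- x \<in> kspan sc S"
  using kspan_scale[OF assms(2), of "-1"] assms(1) by simp

lemma kspan_diff:
  assumes "\<And>x. sc (-1) x = - x" and "x \<in> kspan sc S" "y \<in> kspan sc S"
  shows "x - y \<in> kspan sc S"
  using kspan_add[OF assms(2) kspan_neg[OF assms(1,3)]] by simp

lemma kspan_sum:
  assumes "finite I" "\<And>i. i \<in> I \<Longrightarrow> f i \<in> kspan sc S"
  shows "sum f I \<in> kspan sc S"
  using assms by (induction I rule: finite_induct) (auto intro: kspan.intros)

lemma fscale_neg: "fscale (-1) c = - c"
  by (auto simp: fscale_def)

locale invalg =
  fixes sc :: "'k::comm_ring_1 \<Rightarrow> 'a::ring_1 \<Rightarrow> 'a" and bar :: "'a \<Rightarrow> 'a"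
  assumes inv: "inv_algebra sc bar"
begin

lemma sc_add: "sc r (x + y) = sc r x + sc r y" using inv unfolding inv_algebra_def by blast
lemma sc_radd: "sc (r + q) x = sc r x + sc q x" using inv unfolding inv_algebra_def by blast
lemma sc_mult: "sc (r * q) x = sc r (sc q x)" using inv unfolding inv_algebra_def by blast
lemma sc_one: "sc 1 x = x" using inv unfolding inv_algebra_def by blast
lemma sc_left: "sc r (x * y) = sc r x * y" using inv unfolding inv_algebra_def by blast
lemma sc_right: "sc r (x * y) = x * sc r y" using inv unfolding inv_algebra_def by blast
lemma bar_mult: "bar (x * y) = bar y * bar x" using inv unfolding inv_algebra_def by blast
lemma bar_one: "bar 1 = 1" using inv unfolding inv_algebra_def by blast

lemma sc_zero_r: "sc r 0 = 0"
  using sc_add[of r 0 0] by simp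
lemma sc_zero_l: "sc 0 x = 0"
  using sc_radd[of 0 0 x] by simp
lemma sc_m1: "sc (-1) x = - x"
proof -
  have "sc (-1) x + sc 1 x = 0" using sc_radd[of "-1" 1 x] sc_zero_l by simp
  then show ?thesis using sc_one by (simp add: add_eq_0_iff2)
qed

lemma sc_sum: "finite I \<Longrightarrow> sc r (sum f I) = (\<Sum>i\<in>I. sc r (f i))"
  by (induction I rule: finite_induct) (auto simp: sc_zero_r sc_add)

abbreviation E where "E \<equiv> im_d sc bar"

lemma E_add: "x \<in> E \<Longrightarrow> y \<in> E \<Longrightarrow> x + y \<in> E"
  unfolding im_d_def by (rule kspan_add)
lemma E_diff: "x \<in> E \<Longrightarrow> y \<in> E \<Longrightarrow> x - y \<in> E"
  unfolding im_d_def by (rule kspan_diff[where sc=sc]) (simp_all add: sc_m1)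
lemma E_zero: "0 \<in> E"
  unfolding im_d_def by (rule kspan_zero)
lemma E_sc: "x \<in> E \<Longrightarrow> sc r x \<in> E"
  unfolding im_d_def by (rule kspan_scale)
lemma E_gen: "a0 * a1 * a2 - a2 * bar a1 * a0 \<in> E"
  unfolding im_d_def by (rule kspan_base) blast
lemma E_trans: "x - y \<in> E \<Longrightarrow> y - z \<in> E \<Longrightarrow> x - z \<in> E"
  using E_add[of "x - y" "y - z"] by simp
lemma E_sym: "x - y \<in> E \<Longrightarrow> y - x \<in> E"
  using E_diff[OF E_zero, of "x - y"] by simp

lemma E_comm: "x * y - y * x \<in> E"
  using E_gen[of x 1 y] by (simp add: bar_one)
lemma E_barl: "b * c - bar b * c \<in> E"
proof -
  have "1 * b * c - c * bar b * 1 \<in> E" by (rule E_gen)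
  then have "b * c - c * bar b \<in> E" by simp
  then show ?thesis using E_comm[of c "bar b"] E_trans by blast
qed
lemma E_swap3: "a * b * c - b * a * c \<in> E"
proof -
  have 1: "a * b * c - c * (bar b * a) \<in> E" using E_gen[of a b c] by (simp add: mult.assoc)
  have 2: "c * (bar b * a) - (bar b * a) * c \<in> E" by (rule E_comm)
  have 3: "bar b * (a * c) - b * (a * c) \<in> E" using E_sym[OF E_barl[of b "a * c"]] .
  show ?thesis using E_trans[OF E_trans[OF 1 2]] 3 by (simp add: mult.assoc)
qed

lemma E_perm: "mset l = mset l' \<Longrightarrow> P * prod_list l - P * prod_list l' \<in> E"
proof (induction l arbitrary: l' P)
  case Nil then show ?case by (simp add: E_zero)
next
  case (Cons x xs)
  have "x \<in> set l'" using Cons.prems by (metis list.set_intros(1) set_mset_mset)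
  then obtain us vs where l': "l' = us @ x # vs" by (meson split_list)
  have ms: "mset xs = mset (us @ vs)" using Cons.prems l' by simp
  define U where "U = prod_list us"
  define V where "V = prod_list vs"
  have 1: "(P * U) * x * V - x * (P * U) * V \<in> E" by (rule E_swap3)
  have 2: "x * (P * U) * V - P * x * (U * V) \<in> E" using E_swap3[of x P "U * V"] by (simp add: mult.assoc)
  have 3: "(P * x) * prod_list (us @ vs) - (P * x) * prod_list xs \<in> E"
    using E_sym[OF Cons.IH[OF ms, of "P * x"]] .
  have "P * prod_list l' - P * x * (U * V) \<in> E"
    using E_trans[OF 1 2] by (simp add: l' U_def V_def mult.assoc)
  then have "P * prod_list l' - P * prod_list (x # xs) \<in> E"
    using E_trans[OF _ 3] by (simp add: U_def V_def mult.assoc)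
  then show ?case by (rule E_sym)
qed

lemma E_bars: "(\<forall>i\<in>set ys. h i = v i \<or> h i = bar (v i)) \<Longrightarrow>
   P * prod_list (map h ys) - P * prod_list (map v ys) \<in> E"
proof (induction ys arbitrary: P)
  case Nil then show ?case by (simp add: E_zero)
next
  case (Cons y ys)
  define R where "R = prod_list (map h ys)"
  have IH: "(P * v y) * R - (P * v y) * prod_list (map v ys) \<in> E"
    using Cons by (simp add: R_def)
  have "P * (h y * R) - (P * v y) * R \<in> E"
  proof (cases "h y = v y")
    case True then show ?thesis by (simp add: mult.assoc E_zero)
  next
    case False
    then have hy: "h y = bar (v y)" using Cons.prems by auto
    have 1: "P * bar (v y) * R - bar (v y) * P * R \<in> E" by (rule E_swap3)
    have 2: "bar (v y) * P * R - v y * P * R \<in> E" using E_sym[OF E_barl[of "v y" "P * R"]] by (simp add: mult.assoc)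
    have 3: "v y * P * R - P * v y * R \<in> E" by (rule E_swap3)
    show ?thesis using E_trans[OF E_trans[OF 1 2] 3] hy by (simp add: mult.assoc)
  qed
  then show ?case using E_trans[OF _ IH] by (simp add: R_def mult.assoc)
qed

lemma prod_dh: "prod_list (map (\<lambda>fib. prod_list (map h fib)) L) = prod_list (map h (concat L))"
  by (induction L) auto

lemma E_mor:
  assumes "dh_mor n m L" "length as = Suc n"
  shows "prod_list (dh_act bar L lab as) - prod_list as \<in> E"
proof -
  define h where "h x = (if lab x then bar (as ! x) else as ! x)" for x
  have a: "prod_list (dh_act bar L lab as) = prod_list (map h (concat L))"
    unfolding dh_act_def h_def by (rule prod_dh)
  have b: "1 * prod_list (map h (concat L)) - 1 * prod_list (map (\<lambda>x. as ! x) (concat L)) \<in> E"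
    by (rule E_bars) (auto simp: h_def)
  have "mset (concat L) = mset [0..<Suc n]"
    using assms(1) unfolding dh_mor_def
    by (subst set_eq_iff_mset_eq_distinct[symmetric]) (auto simp: atLeast0_atMost_Suc atLeast0AtMost lessThan_Suc_atMost)
  then have "mset (map (\<lambda>x. as ! x) (concat L)) = mset (map (\<lambda>x. as ! x) [0..<length as])"
    using assms(2) by (metis mset_map)
  then have c: "1 * prod_list (map (\<lambda>x. as ! x) (concat L)) - 1 * prod_list as \<in> E"
    using E_perm by (metis map_nth)
  show ?thesis using E_trans[OF b c] a by simp
qed

definition supp :: "('a list \<Rightarrow> 'k) \<Rightarrow> 'a list set" where
  "supp c = {l. c l \<noteq> 0}"

definition Psi :: "('a list \<Rightarrow> 'k) \<Rightarrow> 'a" where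
  "Psi c = (\<Sum>l\<in>supp c. sc (c l) (prod_list l))"

lemma Psi_sup: "finite S \<Longrightarrow> supp c \<subseteq> S \<Longrightarrow> Psi c = (\<Sum>l\<in>S. sc (c l) (prod_list l))"
  unfolding Psi_def by (rule sum.mono_neutral_left) (auto simp: supp_def sc_zero_l)

lemma supp_add: "supp (c + d) \<subseteq> supp c \<union> supp d" by (auto simp: supp_def)
lemma supp_diff: "supp (c - d) \<subseteq> supp c \<union> supp d" by (auto simp: supp_def)
lemma supp_sc: "supp (fscale r c) \<subseteq> supp c" by (auto simp: supp_def fscale_def)
lemma supp_delta: "supp (delta w :: 'a list \<Rightarrow> 'k) = {w}" by (auto simp: supp_def delta_def)

lemma Psi_add: "finite (supp c) \<Longrightarrow> finite (supp d) \<Longrightarrow> Psi (c + d) = Psi c + Psi d"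
proof -
  assume f: "finite (supp c)" "finite (supp d)"
  let ?S = "supp c \<union> supp d"
  have "Psi (c + d) = (\<Sum>l\<in>?S. sc ((c + d) l) (prod_list l))"
    using f supp_add by (intro Psi_sup) auto
  also have "\<dots> = (\<Sum>l\<in>?S. sc (c l) (prod_list l)) + (\<Sum>l\<in>?S. sc (d l) (prod_list l))"
    by (simp add: sc_radd sum.distrib)
  also have "\<dots> = Psi c + Psi d"
    using f by (subst (1 2) Psi_sup[of ?S]) auto
  finally show ?thesis .
qed

lemma Psi_diff: "finite (supp c) \<Longrightarrow> finite (supp d) \<Longrightarrow> Psi (c - d) = Psi c - Psi d"
proof -
  assume f: "finite (supp c)" "finite (supp d)"
  have "finite (supp (c - d))" using f supp_diff by (meson finite_Un finite_subset)
  then have "Psi (c - d + d) = Psi (c - d) + Psi d" using f Psi_add by blast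
  then show ?thesis by simp
qed

lemma Psi_sc: "finite (supp c) \<Longrightarrow> Psi (fscale r c) = sc r (Psi c)"
proof -
  assume f: "finite (supp c)"
  have "Psi (fscale r c) = (\<Sum>l\<in>supp c. sc (fscale r c l) (prod_list l))"
    using f supp_sc by (intro Psi_sup) auto
  also have "\<dots> = sc r (Psi c)"
    unfolding Psi_def using f by (simp add: sc_sum fscale_def sc_mult)
  finally show ?thesis .
qed

lemma Psi_delta: "Psi (delta w) = prod_list w"
  unfolding Psi_def supp_delta by (simp add: delta_def sc_one)

lemma Psi_rel: "c \<in> HO0_rel sc bar \<Longrightarrow> finite (supp c) \<and> Psi c \<in> E"
  unfolding HO0_rel_def
proof (induction rule: kspan.induct)
  case kspan_zero
  then show ?case by (simp add: supp_def Psi_def E_zero)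
next
  case (kspan_base x)
  have fd: "finite (supp (delta w :: 'a list \<Rightarrow> 'k))" for w by (simp add: supp_delta)
  have fdd: "finite (supp (delta w - delta w' :: 'a list \<Rightarrow> 'k))" for w w'
    using supp_diff[of "delta w" "delta w'"] by (simp add: supp_delta finite_subset)
  from kspan_base consider
    (A) xs a b ys where "x = delta (xs @ [a + b] @ ys) - delta (xs @ [a] @ ys) - delta (xs @ [b] @ ys)"
    | (B) xs r a ys where "x = delta (xs @ [sc r a] @ ys) - fscale r (delta (xs @ [a] @ ys))"
    | (C) n m L lab as where "x = delta (dh_act bar L lab as) - delta as" "dh_mor n m L" "length as = Suc n"
    unfolding HO0_gens_def by blast
  then show ?case
  proof cases
    case A
    have f1: "finite (supp x)" unfolding A
      using supp_diff[of "delta (xs @ [a + b] @ ys) - delta (xs @ [a] @ ys)" "delta (xs @ [b] @ ys)"] fdd fd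
      by (meson finite_Un finite_subset)
    have "Psi x = 0" unfolding A using fd fdd
      by (simp add: Psi_diff Psi_delta distrib_left distrib_right)
    then show ?thesis using f1 E_zero by simp
  next
    case B
    have fs: "finite (supp (fscale r (delta (xs @ [a] @ ys))))"
      using supp_sc fd finite_subset by blast
    have f1: "finite (supp x)" unfolding B
      using supp_diff fs fd by (meson finite_Un finite_subset)
    have "Psi x = 0" unfolding B using fd fs
      using sc_left[of r "prod_list xs" "a * prod_list ys"] sc_right[of r "prod_list xs" "a * prod_list ys"]
        sc_left[of r a "prod_list ys"]
      by (simp add: Psi_diff Psi_delta Psi_sc)
    then show ?thesis using f1 E_zero by simp
  next
    case C
    have "Psi x = prod_list (dh_act bar L lab as) - prod_list as"
      unfolding C using fd by (simp add: Psi_diff Psi_delta)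
    then show ?thesis using fdd[of "dh_act bar L lab as" as] E_mor[OF C(2,3), of lab] unfolding C(1) by metis
  qed
next
  case (kspan_add x y)
  then show ?case using Psi_add supp_add E_add by (metis finite_Un finite_subset)
next
  case (kspan_scale x r)
  then show ?case using Psi_sc supp_sc E_sc by (metis finite_subset)
qed

abbreviation R :: "('a list \<Rightarrow> 'k) set" where "R \<equiv> HO0_rel sc bar"

lemma R_add: "x \<in> R \<Longrightarrow> y \<in> R \<Longrightarrow> x + y \<in> R"
  unfolding HO0_rel_def by (rule kspan_add)
lemma R_diff: "x \<in> R \<Longrightarrow> y \<in> R \<Longrightarrow> x - y \<in> R"
  unfolding HO0_rel_def by (rule kspan_diff[where sc=fscale]) (simp_all add: fscale_neg)
lemma R_zero: "0 \<in> R"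
  unfolding HO0_rel_def by (rule kspan_zero)
lemma R_sc: "x \<in> R \<Longrightarrow> fscale r x \<in> R"
  unfolding HO0_rel_def by (rule kspan_scale)
lemma R_gen: "x \<in> HO0_gens sc bar \<Longrightarrow> x \<in> R"
  unfolding HO0_rel_def by (rule kspan_base)
lemma R_sum: "finite I \<Longrightarrow> (\<And>i. i \<in> I \<Longrightarrow> f i \<in> R) \<Longrightarrow> sum f I \<in> R"
  unfolding HO0_rel_def by (rule kspan_sum)

lemma R_ga: "delta (xs @ [a + b] @ ys) - delta (xs @ [a] @ ys) - delta (xs @ [b] @ ys) \<in> R"
  by (rule R_gen) (unfold HO0_gens_def, blast)
lemma R_gs: "delta (xs @ [sc r a] @ ys) - fscale r (delta (xs @ [a] @ ys)) \<in> R"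
  by (rule R_gen) (unfold HO0_gens_def, blast)
lemma R_gm: "dh_mor n m L \<Longrightarrow> length as = Suc n \<Longrightarrow> delta (dh_act bar L lab as) - delta as \<in> R"
  by (rule R_gen) (unfold HO0_gens_def, blast)

lemma R_add1: "delta [u + v] - (delta [u] + delta [v]) \<in> R"
  using R_ga[of "[]" u v "[]"] by (simp add: diff_diff_eq)
lemma R_sc1: "delta [sc r u] - fscale r (delta [u]) \<in> R"
  using R_gs[of "[]" r u "[]"] by simp
lemma R_d0: "delta [0] \<in> R"
proof -
  have "delta [0] - (delta [0] + delta [0]) \<in> R" using R_add1[of 0 0] by simp
  then have "- delta [0] \<in> R" by simp
  then show ?thesis using R_diff[OF R_zero, of "- delta [0]"] by simp
qed
lemma R_diff1: "delta [u - v] - (delta [u] - delta [v]) \<in> R"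
proof -
  have "delta [u] - (delta [u - v] + delta [v]) \<in> R" using R_add1[of "u - v" v] by simp
  from R_diff[OF R_zero this] show ?thesis by (simp add: algebra_simps)
qed

lemma R_word: "l \<noteq> [] \<Longrightarrow> delta [prod_list l] - delta l \<in> R"
proof -
  assume "l \<noteq> []"
  then obtain n where n: "length l = Suc n" by (cases l) auto
  have "dh_mor n 0 [[0..<Suc n]]" unfolding dh_mor_def by auto
  from R_gm[OF this n, of "\<lambda>_. False"] show ?thesis
    by (simp add: dh_act_def n[symmetric] map_nth)
qed

lemma R_E: "z \<in> E \<Longrightarrow> delta [z] \<in> R"
  unfolding im_d_def
proof (induction rule: kspan.induct)
  case kspan_zero then show ?case by (rule R_d0)
next
  case (kspan_base x)
  then obtain a0 a1 a2 where x: "x = a0 * a1 * a2 - a2 * bar a1 * a0" by blast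
  have m1: "dh_mor 2 0 [[0,1,2]]" unfolding dh_mor_def by auto
  have m2: "dh_mor 2 0 [[2,1,0]]" unfolding dh_mor_def by auto
  have 1: "delta [a0 * a1 * a2] - delta [a0, a1, a2] \<in> R"
    using R_gm[OF m1, of "[a0,a1,a2]" "\<lambda>_. False"] by (simp add: dh_act_def mult.assoc)
  have 2: "delta [a2 * bar a1 * a0] - delta [a0, a1, a2] \<in> R"
    using R_gm[OF m2, of "[a0,a1,a2]" "\<lambda>i. i = 1"] by (simp add: dh_act_def mult.assoc)
  have "delta [x] - (delta [a0 * a1 * a2] - delta [a2 * bar a1 * a0]) \<in> R"
    unfolding x by (rule R_diff1)
  then have "delta [x] - (delta [a0 * a1 * a2] - delta [a0, a1, a2])
     + (delta [a2 * bar a1 * a0] - delta [a0, a1, a2]) \<in> R"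
    by (simp add: algebra_simps)
  from R_add[OF R_diff[OF this 2] 1] show ?case by simp
next
  case (kspan_add x y)
  have "delta [x + y] - (delta [x] + delta [y]) + delta [x] + delta [y] \<in> R"
    using R_add1 kspan_add R_add by blast
  then show ?case by simp
next
  case (kspan_scale x r)
  have "delta [sc r x] - fscale r (delta [x]) + fscale r (delta [x]) \<in> R"
    using R_sc1 kspan_scale R_add R_sc by blast
  then show ?case by simp
qed

lemma R_dsum: "finite S \<Longrightarrow> delta [sum f S] - (\<Sum>i\<in>S. delta [f i]) \<in> R"
proof (induction S rule: finite_induct)
  case empty then show ?case using R_d0 by simp
next
  case (insert a S)
  have "delta [f a + sum f S] - (delta [f a] + delta [sum f S])
     + (delta [sum f S] - (\<Sum>i\<in>S. delta [f i])) \<in> R"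
    using R_add R_add1 insert by blast
  moreover have "delta [sum f (insert a S)] - (\<Sum>i\<in>insert a S. delta [f i]) =
     delta [f a + sum f S] - (delta [f a] + delta [sum f S])
     + (delta [sum f S] - (\<Sum>i\<in>S. delta [f i]))"
    using insert by (simp add: algebra_simps)
  ultimately show ?case by metis
qed

lemma main: "quot_iso sc UNIV E (fscale :: 'k \<Rightarrow> ('a list \<Rightarrow> 'k) \<Rightarrow> _) free_words R"
  unfolding quot_iso_def
proof (intro exI[of _ "\<lambda>x. delta [x]"] conjI ballI allI)
  fix x :: 'a
  show "(delta [x] :: 'a list \<Rightarrow> 'k) \<in> free_words"
    unfolding free_words_def delta_def by auto
next
  fix x y :: 'a
  show "((delta [x] :: 'a list \<Rightarrow> 'k) - delta [y] \<in> R) = (x - y \<in> E)"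
  proof
    assume "(delta [x] :: 'a list \<Rightarrow> 'k) - delta [y] \<in> R"
    from Psi_rel[OF this] show "x - y \<in> E"
      by (simp add: Psi_diff supp_delta Psi_delta)
  next
    assume "x - y \<in> E"
    from R_diff[OF R_E[OF this] R_diff1[of x y]] show "(delta [x] :: 'a list \<Rightarrow> 'k) - delta [y] \<in> R"
      by simp
  qed
next
  fix x y :: 'a
  show "(delta [x + y] :: 'a list \<Rightarrow> 'k) - (delta [x] + delta [y]) \<in> R" by (rule R_add1)
next
  fix r and x :: 'a
  show "(delta [sc r x] :: 'a list \<Rightarrow> 'k) - fscale r (delta [x]) \<in> R" by (rule R_sc1)
next
  fix z :: "'a list \<Rightarrow> 'k"
  assume z: "z \<in> free_words"
  let ?S = "supp z"
  have fin: "finite ?S" and ne: "\<And>l. l \<in> ?S \<Longrightarrow> l \<noteq> []"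
    using z unfolding free_words_def supp_def by auto
  define x where "x = (\<Sum>l\<in>?S. sc (z l) (prod_list l))"
  have zs: "z = (\<Sum>l\<in>?S. fscale (z l) (delta l))"
  proof
    fix w
    show "z w = (\<Sum>l\<in>?S. fscale (z l) (delta l)) w"
      using fin by (simp add: sum_fun_app fscale_def delta_def supp_def if_distrib[where f="\<lambda>x. _ * x"] sum.delta cong: if_cong)
  qed
  have 1: "delta [x] - (\<Sum>l\<in>?S. delta [sc (z l) (prod_list l)]) \<in> R"
    unfolding x_def using fin by (rule R_dsum)
  have 2: "(\<Sum>l\<in>?S. delta [sc (z l) (prod_list l)] - fscale (z l) (delta [prod_list l])) \<in> R"
    using fin R_sc1 by (intro R_sum) auto
  have fd: "fscale r (c - d) = fscale r c - fscale r d" for r and c d :: "'a list \<Rightarrow> 'k"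
    by (auto simp: fscale_def algebra_simps)
  have 3: "(\<Sum>l\<in>?S. fscale (z l) (delta [prod_list l] - delta l)) \<in> R"
    using fin R_word ne by (intro R_sum R_sc) auto
  have "delta [x] - (\<Sum>l\<in>?S. delta [sc (z l) (prod_list l)])
      + (\<Sum>l\<in>?S. delta [sc (z l) (prod_list l)] - fscale (z l) (delta [prod_list l]))
      + (\<Sum>l\<in>?S. fscale (z l) (delta [prod_list l] - delta l)) \<in> R"
    using 1 2 3 R_add by blast
  then have "(delta [x] :: 'a list \<Rightarrow> 'k) - z \<in> R"
    by (subst zs) (simp add: fd sum_subtractf)
  then show "\<exists>x\<in>UNIV. (delta [x] :: 'a list \<Rightarrow> 'k) - z \<in> R" by blast
qed

end

theorem corollary5p6:
  fixes sc :: "'k::comm_ring_1 \<Rightarrow> 'a::ring_1 \<Rightarrow> 'a" and bar :: "'a \<Rightarrow> 'a"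
  assumes "inv_algebra sc bar"
  shows "quot_iso sc UNIV (im_d sc bar)
           (fscale :: 'k \<Rightarrow> ('a list \<Rightarrow> 'k) \<Rightarrow> _) free_words (HO0_rel sc bar)"
  using invalg.main[OF invalg.intro[OF assms]] .

end
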